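(* Fix $r\ge2$ and $\epsilon>0$. For all sufficiently large $k$ the following holds: if a coloring of $[1,M_\epsilon]$ produced by the random scheme in the context (i.e., any outcome of it) has no bad $t$-term arithmetic progression with common difference greater than $b$, then every monochromatic $\lfloor k/2\rfloor$-term ascending wave $w_1<\dots<w_{\lfloor k/2\rfloor}$ in $[1,M_\epsilon]$ satisfies $w_{\lfloor k/2\rfloor}-w_{\lfloor k/2\rfloor-1}\geq b\,k^{1-\epsilon/2}$.
   Context: Ascending wave: positive integers $w_1<\dots<w_n$ with $w_{i+1}-w_i\ge w_i-w_{i-1}$ for $2\le i\le n-1$; $AW(k;r)$ is the least $N$ such that every $r$-coloring of $\{1,\dots,N\}$ has a monochromatic $k$-term ascending wave. Non-integer quantities used as integers are rounded down; $\log=\log_2$. Fix $r\ge2$, $\epsilon>0$, and $k$. Let $K=\lfloor k/(10(4r-4))\rfloor$, $b=AW(K;r-1)-1$, and $M_\epsilon=\lfloor k^{2r-1-\epsilon}/(2^{r-1}(40r)^{r^2-1})\rfloor$. For each $i\in\{0,\dots,r-1\}$ fix a coloring $\gamma_i$ of $\{1,\dots,b\}$ with colors from $\{0,\dots,r-1\}\setminus\{i\}$ having no monochromatic $K$-term ascending wave. Let $A$ be the $r^2\times 2r$ matrix with rows indexed by pairs $(j,i)$, $j\in\{0,\dots,r-1\}$, $i\in\{1,\dots,r\}$, whose row $(j,i)$ has entry $(m+j)\bmod r$ in position $2m+1$ and entry $(i+m-1+j)\bmod r$ in position $2m+2$, for $m=0,\dots,r-1$. Partition $[1,M_\epsilon]$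 into consecutive blocks $B_1,B_2,\dots$ of $b$ integers each (the last possibly partial), and group the blocks into consecutive groups of $2r$ blocks. For each group independently, choose a row $(s_1,\dots,s_{2r})$ of $A$ uniformly at random, give the $l$-th block of the group the label $s_l$, and color it by $\gamma_{s_l}$ (translated to that block). An arithmetic progression $x_1<\dots<x_t$ is good if for every $c\in\{0,\dots,r-1\}$ there is a term $x_i$ lying in a block $B_j$ such that $B_j$ and $B_{j+1}$ both have label $c$; otherwise it is bad. Here $t=\frac{(4r-2)(2r+1)}{\log(r^2/(r^2-1))}\log k+\frac{(2r+1)(\log r+1)}{\log(r^2/(r^2-1))}$. *)

theory Defs
  imports Complex_Main
begin

definition asc_wave :: "nat \<Rightarrow> (nat \<Rightarrow> nat) \<Rightarrow> bool" where
  "asc_wave n w \<longleftrightarrow>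
     (\<forall>i<n. 0 < w i) \<and>
     (\<forall>i. i + 1 < n \<longrightarrow> w i < w (i + 1)) \<and>
     (\<forall>i. 1 \<le> i \<and> i + 1 < n \<longrightarrow> w i - w (i - 1) \<le> w (i + 1) - w i)"

definition mono_wave :: "(nat \<Rightarrow> nat) \<Rightarrow> nat set \<Rightarrow> nat \<Rightarrow> (nat \<Rightarrow> nat) \<Rightarrow> bool" where
  "mono_wave chi S n w \<longleftrightarrow>
     asc_wave n w \<and> (\<forall>i<n. w i \<in> S) \<and> (\<forall>i<n. chi (w i) = chi (w 0))"

definition AW :: "nat \<Rightarrow> nat \<Rightarrow> nat" where
  "AW k r = (LEAST N. \<forall>chi :: nat \<Rightarrow> nat. (\<forall>x\<in>{1..N}. chi x < r) \<longrightarrow>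
                          (\<exists>w. mono_wave chi {1..N} k w))"

text \<open>Entry of the matrix A in row (j,i) at (0-based) position l, i.e. position l+1:
  position 2m+1 has (m+j) mod r, position 2m+2 has (i+m-1+j) mod r.\<close>
definition A_entry :: "nat \<Rightarrow> nat \<times> nat \<Rightarrow> nat \<Rightarrow> nat" where
  "A_entry r row l =
     (let j = fst row; i = snd row; m = l div 2 in
      if even l then (m + j) mod r else (i + m - 1 + j) mod r)"

text \<open>Label of the (0-based) block q, given the chosen row rho g of each (0-based) group g
  of 2r consecutive blocks.\<close>
definition block_label :: "nat \<Rightarrow> (nat \<Rightarrow> nat \<times> nat) \<Rightarrow> nat \<Rightarrow> nat" where
  "block_label r rho q = A_entry r (rho (q div (2 * r))) (q mod (2 * r))"

definition block_of :: "nat \<Rightarrow> nat \<Rightarrow> nat" where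
  "block_of b x = (x - 1) div b"

definition scheme_color :: "nat \<Rightarrow> nat \<Rightarrow> (nat \<Rightarrow> nat \<Rightarrow> nat) \<Rightarrow> (nat \<Rightarrow> nat \<times> nat) \<Rightarrow> nat \<Rightarrow> nat" where
  "scheme_color r b gamma rho x = gamma (block_label r rho (block_of b x)) ((x - 1) mod b + 1)"

definition good_AP :: "nat \<Rightarrow> nat \<Rightarrow> nat \<Rightarrow> (nat \<Rightarrow> nat \<times> nat) \<Rightarrow> nat \<Rightarrow> nat \<Rightarrow> nat \<Rightarrow> bool" where
  "good_AP r b M rho t a d \<longleftrightarrow>
     (\<forall>c<r. \<exists>i<t. let q = block_of b (a + i * d) in
        (q + 1) * b + 1 \<le> M \<and> block_label r rho q = c \<and> block_label r rho (q + 1) = c)"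

end

theory Submission imports Defs begin

lemma ln_le_powr_div:
  fixes x c :: real assumes x: "x \<ge> 1" and c: "c > 0"
  shows "ln x \<le> x powr c / c"
proof -
  have "ln (x powr c) \<le> x powr c - 1" by (rule ln_le_minus_one) (use x in simp)
  moreover have "ln (x powr c) = c * ln x" using x by (simp add: ln_powr)
  ultimately have "c * ln x \<le> x powr c" by simp
  then show ?thesis using c by (simp add: pos_le_divide_eq mult.commute)
qed

lemma asym_main:
  fixes e A B :: real assumes e: "e > 0" and A: "A > 0" and B: "B \<ge> 2"
  shows "eventually (\<lambda>k::nat. (A * log 2 (real k) + B)^2 * real k powr (1 - e/2) \<le> real k / 4
            \<and> A * log 2 (real k) + B \<ge> 2) sequentially"
proof -
  define \<delta> where "\<delta> = e / 8"
  have dp: "\<delta> > 0" using e \<delta>_def by simp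
  define C where "C = A / (\<delta> * ln 2) + B"
  have "A / (\<delta> * ln 2) > 0" using A dp by simp
  hence C2: "C \<ge> 2" unfolding C_def using B by simp
  define D where "D = (4 * C^2) powr (4 / e)"
  have ev: "eventually (\<lambda>k::nat. k \<ge> nat \<lceil>D\<rceil> + 1) sequentially" by (rule eventually_ge_at_top)
  show ?thesis using ev
  proof eventually_elim
    case (elim k)
    define x where "x = real k"
    have x1: "x \<ge> 1" using elim x_def by simp
    have xD: "x \<ge> D" using elim x_def by linarith
    have lg0: "log 2 x \<ge> 0" using x1 by simp
    have lg: "log 2 x \<le> x powr \<delta> / (\<delta> * ln 2)"
    proof -
      have "log 2 x = ln x / ln 2" by (simp add: log_def)
      also have "\<dots> \<le> (x powr \<delta> / \<delta>) / ln 2"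
        using ln_le_powr_div[OF x1 dp] by (intro divide_right_mono) auto
      finally show ?thesis by simp
    qed
    define u where "u = A * log 2 x + B"
    have u2: "u \<ge> 2" unfolding u_def using A lg0 B by (simp add: mult_nonneg_nonneg add_increasing)
    have xd1: "x powr \<delta> \<ge> 1" using x1 dp by (intro ge_one_powr_ge_zero) auto
    have uC: "u \<le> C * x powr \<delta>"
    proof -
      have "A * log 2 x \<le> A * (x powr \<delta> / (\<delta> * ln 2))" using lg A by (intro mult_left_mono) auto
      moreover have "B \<le> B * x powr \<delta>" using xd1 B by simp
      ultimately show ?thesis unfolding u_def C_def by (simp add: algebra_simps)
    qed
    have usq: "u^2 \<le> C^2 * x powr (2 * \<delta>)"
    proof -
      have "u^2 \<le> (C * x powr \<delta>)^2" using uC u2 by (intro power_mono) auto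
      also have "\<dots> = C^2 * (x powr \<delta> * x powr \<delta>)" by (simp add: power2_eq_square)
      also have "x powr \<delta> * x powr \<delta> = x powr (2 * \<delta>)" by (simp add: powr_add[symmetric])
      finally show ?thesis .
    qed
    have big: "x powr (e / 4) \<ge> 4 * C^2"
    proof -
      have D0: "D \<ge> 0" unfolding D_def by simp
      have "D powr (e / 4) \<le> x powr (e / 4)" using xD D0 e by (intro powr_mono2) auto
      moreover have "D powr (e / 4) = 4 * C^2"
        unfolding D_def using e C2 by (simp add: powr_powr)
      ultimately show ?thesis by simp
    qed
    have "u^2 * x powr (1 - e/2) \<le> C^2 * x powr (2 * \<delta>) * x powr (1 - e/2)"
      using usq by (intro mult_right_mono) auto
    also have "\<dots> = C^2 * x powr (1 - e / 4)"
      using x1 by (simp add: mult.assoc powr_add[symmetric] \<delta>_def)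
    also have "\<dots> \<le> (x powr (e / 4) / 4) * x powr (1 - e / 4)"
      using big by (intro mult_right_mono) auto
    also have "\<dots> = x / 4" using x1 by (simp add: powr_add[symmetric])
    finally show ?case using u2 unfolding u_def x_def by simp
  qed
qed

lemma blk_bounds:
  assumes "b \<ge> 1" "x \<ge> (1::nat)"
  shows "block_of b x * b < x \<and> x \<le> block_of b x * b + b \<and> (x - 1) mod b + 1 = x - block_of b x * b"
proof -
  have e: "(x - 1) div b * b + (x - 1) mod b = x - 1" by simp
  have m: "(x - 1) mod b < b" using assms by simp
  show ?thesis unfolding block_of_def using e m assms by linarith
qed

lemma blk_mono: "x \<le> y \<Longrightarrow> block_of b x \<le> block_of b y"
  unfolding block_of_def by (intro div_le_mono diff_le_mono)



locale wctx =
  fixes r b K n M t :: nat and gamma :: "nat \<Rightarrow> nat \<Rightarrow> nat"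
    and rho :: "nat \<Rightarrow> nat \<times> nat" and w :: "nat \<Rightarrow> nat"
  assumes r2: "r \<ge> 2" and b1: "b \<ge> 1"
  and gam: "\<forall>i<r. (\<forall>x\<in>{1..b}. gamma i x < r \<and> gamma i x \<noteq> i) \<and>
                 \<not> (\<exists>w. mono_wave (gamma i) {1..b} K w)"
  and rhoa: "\<forall>g. rho g \<in> {..<r} \<times> {1..r}"
  and mw: "mono_wave (scheme_color r b gamma rho) {1..M} n w"
  and gap: "\<forall>a d. 1 \<le> a \<and> a + (t - 1) * d \<le> M \<and> d > b \<longrightarrow> good_AP r b M rho t a d"
  and n1: "n \<ge> 1"
begin

abbreviation "chi \<equiv> scheme_color r b gamma rho"
abbreviation "lab \<equiv> block_label r rho"
abbreviation "blk \<equiv> block_of b"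
abbreviation "g i \<equiv> w (i + 1) - w i"
abbreviation "c \<equiv> chi (w 0)"

lemma w_step: "i + 1 < n \<Longrightarrow> w i < w (i + 1)"
  using mw unfolding mono_wave_def asc_wave_def by blast

lemma w_inc: "i < j \<Longrightarrow> j < n \<Longrightarrow> w i < w j"
proof (induction j)
  case 0 then show ?case by simp
next
  case (Suc j)
  have s: "w j < w (Suc j)" using w_step[of j] Suc.prems by simp
  show ?case
  proof (cases "i = j")
    case True then show ?thesis using s by simp
  next
    case False then show ?thesis using Suc s by simp
  qed
qed

lemma w_le: "i \<le> j \<Longrightarrow> j < n \<Longrightarrow> w i \<le> w j"
  using w_inc[of i j] by (cases "i = j") auto

lemma w_in: "i < n \<Longrightarrow> 1 \<le> w i \<and> w i \<le> M"
  using mw unfolding mono_wave_def by auto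

lemma g_step: "1 \<le> i \<Longrightarrow> i + 1 < n \<Longrightarrow> g (i - 1) \<le> g i"
proof -
  assume a: "1 \<le> i" "i + 1 < n"
  have "w i - w (i - 1) \<le> w (i + 1) - w i"
    using mw a unfolding mono_wave_def asc_wave_def by blast
  moreover have "i - 1 + 1 = i" using a by simp
  ultimately show ?thesis by simp
qed

lemma g_mono: "i \<le> j \<Longrightarrow> j + 1 < n \<Longrightarrow> g i \<le> g j"
proof (induction j)
  case 0 then show ?case by simp
next
  case (Suc j)
  have s: "g j \<le> g (Suc j)" using g_step[of "Suc j"] Suc.prems by simp
  show ?case
  proof (cases "i = Suc j")
    case True then show ?thesis by simp
  next
    case False then show ?thesis using Suc s by simp
  qed
qed

lemma lab_lt: "lab q < r"
  using r2 unfolding block_label_def A_entry_def Let_def by auto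

lemma chi_eq: "x \<ge> 1 \<Longrightarrow> chi x = gamma (lab (blk x)) ((x - 1) mod b + 1)"
  unfolding scheme_color_def by simp

lemma chi_ne: "x \<ge> 1 \<Longrightarrow> chi x \<noteq> lab (blk x) \<and> chi x < r"
proof -
  assume x: "x \<ge> 1"
  have p: "(x - 1) mod b + 1 \<in> {1..b}" using b1
    by (simp add: Suc_leI)
  show ?thesis using gam lab_lt[of "blk x"] p chi_eq[OF x] by auto
qed

lemma col: "i < n \<Longrightarrow> chi (w i) = c"
  using mw unfolding mono_wave_def by blast

lemma c_lt: "c < r"
  using chi_ne w_in n1 by auto

lemma notc: "i < n \<Longrightarrow> lab (blk (w i)) \<noteq> c"
  using chi_ne[of "w i"] w_in[of i] col[of i] by auto


lemma window:
  assumes K1: "K \<ge> 1" and iK: "i + K \<le> n"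
  shows "blk (w i) < blk (w (i + K - 1))"
proof (rule ccontr)
  assume "\<not> ?thesis"
  hence le: "blk (w (i + K - 1)) \<le> blk (w i)" by simp
  define q where "q = blk (w i)"
  have bq: "blk (w (i + j)) = q" if "j < K" for j
  proof -
    have "blk (w i) \<le> blk (w (i + j))" using that iK by (intro blk_mono w_le) auto
    moreover have "blk (w (i + j)) \<le> blk (w (i + K - 1))" using that iK by (intro blk_mono w_le) auto
    ultimately show ?thesis using le q_def by simp
  qed
  define v where "v j = w (i + j) - q * b" for j
  have vb: "q * b < w (i + j) \<and> w (i + j) \<le> q * b + b \<and> (w (i + j) - 1) mod b + 1 = v j"
    if "j < K" for j
    using blk_bounds[OF b1, of "w (i + j)"] w_in[of "i + j"] bq[OF that] that iK v_def by auto
  have lq: "lab q < r" by (rule lab_lt)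
  have mv: "mono_wave (gamma (lab q)) {1..b} K v"
    unfolding mono_wave_def asc_wave_def
  proof (intro conjI allI impI)
    fix j assume j: "j < K"
    show "0 < v j" using vb[OF j] v_def by auto
    show "v j \<in> {1..b}" using vb[OF j] v_def by auto
    have "gamma (lab q) (v j) = chi (w (i + j))"
      using chi_eq[of "w (i + j)"] w_in[of "i + j"] j iK bq[OF j] vb[OF j] by auto
    also have "\<dots> = c" using col[of "i + j"] j iK by auto
    also have "\<dots> = gamma (lab q) (v 0)"
      using chi_eq[of "w (i + 0)"] w_in[of "i + 0"] K1 iK bq[of 0] vb[of 0] col[of i] by auto
    finally show "gamma (lab q) (v j) = gamma (lab q) (v 0)" .
  next
    fix j assume j: "j + 1 < K"
    have "w (i + j) < w (i + j + 1)" using w_step[of "i + j"] j iK by simp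
    then show "v j < v (j + 1)" using vb[of j] vb[of "j+1"] j v_def by auto
  next
    fix j assume j: "1 \<le> j \<and> j + 1 < K"
    have "w (i + j) - w (i + j - 1) \<le> w (i + j + 1) - w (i + j)"
      using g_step[of "i + j"] j iK by simp
    moreover have "v j - v (j - 1) = w (i + j) - w (i + j - 1)"
    proof -
      have h1: "q * b < w (i + j)" using vb[of j] j by simp
      have h3: "i + (j - 1) = i + j - 1" using j by simp
      have "j - 1 < K" using j by linarith
      from vb[OF this] have h2: "q * b < w (i + (j - 1))" by simp
      show ?thesis using h1 h2 h3 v_def[of j] v_def[of "j - 1"] by simp
    qed
    moreover have "v (j + 1) - v j = w (i + j + 1) - w (i + j)"
      using vb[of j] vb[of "j + 1"] j v_def by simp
    ultimately show "v j - v (j - 1) \<le> v (j + 1) - v j" by simp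
  qed
  moreover have "\<not> (\<exists>w. mono_wave (gamma (lab q)) {1..b} K w)" using gam lq by simp
  ultimately show False by blast
qed

lemma lab_exists:
  assumes "c' < r"
  shows "\<exists>q. q0 \<le> q \<and> q < q0 + 4 * r \<and> lab q = c'"
proof -
  define gg where "gg = q0 div (2 * r) + 1"
  define j where "j = fst (rho gg)"
  have jr: "j < r" using rhoa j_def by (auto simp: mem_Times_iff)
  define m where "m = (c' + r - j) mod r"
  have mr: "m < r" using r2 m_def by simp
  define q where "q = 2 * r * gg + 2 * m"
  have qm: "q mod (2 * r) = 2 * m" using mr unfolding q_def by simp
  have qd: "q div (2 * r) = gg" using mr r2 unfolding q_def by simp
  have "lab q = (m + j) mod r"
    unfolding block_label_def A_entry_def Let_def using qm qd j_def by simp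
  also have "\<dots> = c'"
  proof -
    have "(m + j) mod r = (c' + r - j + j) mod r" unfolding m_def by (simp add: mod_add_left_eq)
    also have "\<dots> = (c' + r) mod r" using jr by simp
    also have "\<dots> = c'" using assms by simp
    finally show ?thesis .
  qed
  finally have l: "lab q = c'" .
  have a1: "q0 div (2 * r) * (2 * r) \<le> q0" by (rule div_times_less_eq_dividend)
  have a2: "q0 < q0 div (2 * r) * (2 * r) + 2 * r"
  proof -
    have "q0 mod (2 * r) < 2 * r" using r2 by simp
    moreover have "q0 div (2 * r) * (2 * r) + q0 mod (2 * r) = q0" by (rule div_mult_mod_eq)
    ultimately show ?thesis by linarith
  qed
  show ?thesis
    by (rule exI[of _ q]) (use l a1 a2 mr in \<open>auto simp: q_def gg_def algebra_simps\<close>)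
qed

lemma crossing:
  assumes "i \<le> j" "j < n" "blk (w i) \<le> q" "q \<le> blk (w j)" "lab q = c"
  shows "\<exists>l. i \<le> l \<and> l < j \<and> g l > b"
  using assms
proof (induction j)
  case 0
  then have "blk (w 0) = q" by simp
  then show ?case using notc[of 0] 0 by simp
next
  case (Suc j)
  show ?case
  proof (cases "i = Suc j")
    case True
    then show ?thesis using Suc.prems notc[of i] by simp
  next
    case False
    hence ij: "i \<le> j" using Suc.prems by simp
    show ?thesis
    proof (cases "q \<le> blk (w j)")
      case True
      then show ?thesis using Suc.IH ij Suc.prems by force
    next
      case False
      hence lt: "blk (w j) < q" by simp
      have ne: "blk (w (Suc j)) \<noteq> q" using notc[of "Suc j"] Suc.prems by auto
      hence gt: "q + 1 \<le> blk (w (Suc j))" using Suc.prems by simp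
      have wj: "w j \<le> q * b"
      proof -
        have "w j \<le> blk (w j) * b + b" using blk_bounds[OF b1, of "w j"] w_in[of j] Suc.prems by simp
        also have "\<dots> = (blk (w j) + 1) * b" by simp
        also have "\<dots> \<le> q * b" using lt by (intro mult_le_mono1) simp
        finally show ?thesis .
      qed
      have wsj: "(q + 1) * b < w (Suc j)"
      proof -
        have "(q + 1) * b \<le> blk (w (Suc j)) * b" using gt by (intro mult_le_mono1)
        also have "\<dots> < w (Suc j)" using blk_bounds[OF b1, of "w (Suc j)"] w_in[of "Suc j"] Suc.prems by simp
        finally show ?thesis .
      qed
      have "g j > b" using wj wsj by (simp add: algebra_simps)
      then show ?thesis using ij by auto
    qed
  qed
qed


lemma prefix:
  assumes K2: "K \<ge> 2" and P: "(4 * r - 1) * (K - 1) < n"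
  shows "\<exists>i < (4 * r - 1) * (K - 1). g i > b"
proof -
  have step: "blk (w 0) + j \<le> blk (w (j * (K - 1)))" if "j \<le> 4 * r - 1" for j
    using that
  proof (induction j)
    case 0 then show ?case by simp
  next
    case (Suc j)
    have le: "Suc j * (K - 1) \<le> (4 * r - 1) * (K - 1)" using Suc.prems by (intro mult_le_mono1)
    have "j * (K - 1) + K \<le> n" using le P K2 by (simp add: algebra_simps)
    from window[OF _ this] K2
    have "blk (w (j * (K - 1))) < blk (w (j * (K - 1) + K - 1))" by simp
    moreover have "j * (K - 1) + K - 1 = Suc j * (K - 1)" using K2 by (simp add: algebra_simps)
    ultimately show ?case using Suc by simp
  qed
  obtain q where q: "blk (w 0) \<le> q" "q < blk (w 0) + 4 * r" "lab q = c"
    using lab_exists[OF c_lt] by blast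
  have "blk (w 0) + (4 * r - 1) \<le> blk (w ((4 * r - 1) * (K - 1)))" by (rule step) simp
  hence "q \<le> blk (w ((4 * r - 1) * (K - 1)))" using q r2 by simp
  from crossing[OF _ P q(1) this q(3)] show ?thesis by auto
qed

lemma chunk:
  assumes t2: "t \<ge> 2" and st: "s + t < n" and gs: "g s > b"
  shows "b + (t - 1) * g s \<le> (t - 1) * g (s + (t - 1))"
proof (rule ccontr)
  assume neg: "\<not> ?thesis"
  define T where "T = t - 1"
  define d where "d = g s"
  define G where "G = g (s + T)"
  have dG: "d \<le> g (s + i) \<and> g (s + i) \<le> G" if "i \<le> T" for i
  proof -
    have a: "s + i + 1 < n" "s + T + 1 < n" using that st t2 T_def by auto
    have "g s \<le> g (s + i)" by (rule g_mono) (use a in auto)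
    moreover have "g (s + i) \<le> g (s + T)" by (rule g_mono) (use a that in auto)
    ultimately show ?thesis unfolding d_def G_def by simp
  qed
  have bnd: "w s + i * d \<le> w (s + i) \<and> w (s + i) \<le> w s + i * G" if "i \<le> T" for i
    using that
  proof (induction i)
    case 0 then show ?case by simp
  next
    case (Suc i)
    have "w (s + i) < w (s + i + 1)" using w_step[of "s + i"] Suc.prems st t2 T_def by simp
    hence e: "w (s + Suc i) = w (s + i) + g (s + i)" by simp
    show ?case using Suc.IH Suc.prems dG[of i] e by simp
  qed
  have neg': "T * G < b + T * d" using neg unfolding T_def d_def G_def by simp
  have a1: "1 \<le> w s" using w_in[of s] st by simp
  have aM: "w s + T * d \<le> M"
  proof -
    have sT: "s + T < n" using st T_def by simp
    have "w (s + T) \<le> M" using w_in[OF sT] by simp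
    then show ?thesis using bnd[of T] by simp
  qed
  have gd: "good_AP r b M rho t (w s) d"
    using gap a1 aM gs T_def d_def by auto
  then obtain i where i: "i < t" and
    lq: "lab (blk (w s + i * d)) = c" and lq1: "lab (blk (w s + i * d) + 1) = c"
    using c_lt unfolding good_AP_def Let_def by blast
  have iT: "i \<le> T" using i T_def by simp
  define x where "x = w s + i * d"
  define y where "y = w (s + i)"
  have xy: "x \<le> y" using bnd[OF iT] x_def y_def by simp
  have yx: "y < x + b"
  proof -
    obtain e where e: "T = i + e" using iT le_Suc_ex by blast
    have "e * d \<le> e * G" using dG[of 0] by (simp add: mult_le_mono2)
    moreover have "T * G = i * G + e * G" "T * d = i * d + e * d" using e by (simp_all add: algebra_simps)
    moreover have "y \<le> w s + i * G" using bnd[OF iT] y_def by simp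
    ultimately show ?thesis using neg' x_def by linarith
  qed
  have x1: "x \<ge> 1" using a1 x_def by simp
  have b_lo: "blk x \<le> blk y" using xy by (rule blk_mono)
  have b_hi: "blk y \<le> blk x + 1"
  proof -
    have "y - 1 \<le> (x - 1) + b" using yx x1 by simp
    hence "blk y \<le> (x - 1 + b) div b" unfolding block_of_def by (rule div_le_mono)
    also have "\<dots> = blk x + 1" unfolding block_of_def using b1 by simp
    finally show ?thesis .
  qed
  have "lab (blk y) = c"
    using b_lo b_hi lq lq1 x_def by (cases "blk y = blk x") (auto simp: le_Suc_eq)
  moreover have "lab (blk y) \<noteq> c" using notc[of "s + i"] y_def i st by simp
  ultimately show False by simp
qed

lemma telescope:
  assumes t2: "t \<ge> 2" and big: "\<forall>s. P \<le> s \<and> s + 1 < n \<longrightarrow> g s > b"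
  shows "P + j * (t - 1) + 1 < n \<Longrightarrow> j * b + (t - 1) * g P \<le> (t - 1) * g (P + j * (t - 1))"
proof (induction j)
  case 0 then show ?case by simp
next
  case (Suc j)
  define s where "s = P + j * (t - 1)"
  have st: "s + t < n"
  proof -
    have "Suc j * (t - 1) = j * (t - 1) + (t - 1)" by simp
    then show ?thesis using Suc.prems t2 s_def by linarith
  qed
  have gs: "g s > b" using big st s_def t2 by auto
  have c1: "b + (t - 1) * g s \<le> (t - 1) * g (s + (t - 1))" by (rule chunk[OF t2 st gs])
  have pj: "P + j * (t - 1) + 1 < n" using st s_def t2 by simp
  have ih: "j * b + (t - 1) * g P \<le> (t - 1) * g s" unfolding s_def by (rule Suc.IH[OF pj])
  have "s + (t - 1) = P + Suc j * (t - 1)"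
  proof -
    have "Suc j * (t - 1) = (t - 1) + j * (t - 1)" by simp
    then show ?thesis using s_def by linarith
  qed
  note c1' = c1[unfolded this]
  have "Suc j * b = b + j * b" by simp
  then show ?case using c1' ih by linarith
qed

end

lemma core:
  fixes r K b M t k :: nat and eps :: real and gamma :: "nat \<Rightarrow> nat \<Rightarrow> nat"
    and rho :: "nat \<Rightarrow> nat \<times> nat" and w :: "nat \<Rightarrow> nat"
  assumes r2: "r \<ge> 2" and k40: "k \<ge> 40" and Kd: "K = k div (10 * (4 * r - 4))"
  and K2: "K \<ge> 2" and t2: "t \<ge> 2"
  and tk: "real (t - 1) ^ 2 * real k powr (1 - eps / 2) \<le> real k / 4"
  and gam: "\<forall>i<r. (\<forall>x\<in>{1..b}. gamma i x < r \<and> gamma i x \<noteq> i) \<and>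
                 \<not> (\<exists>w. mono_wave (gamma i) {1..b} K w)"
  and rhoa: "\<forall>g. rho g \<in> {..<r} \<times> {1..r}"
  and gap: "\<forall>a d. 1 \<le> a \<and> a + (t - 1) * d \<le> M \<and> d > b \<longrightarrow> good_AP r b M rho t a d"
  and mw: "mono_wave (scheme_color r b gamma rho) {1..M} (k div 2) w"
  shows "real (w (k div 2 - 1) - w (k div 2 - 2)) \<ge> real b * real k powr (1 - eps / 2)"
proof (cases "b = 0")
  case True then show ?thesis by simp
next
  case False
  hence b1: "b \<ge> 1" by simp
  define n where "n = k div 2"
  have n1: "n \<ge> 1" using k40 n_def by simp
  interpret W: wctx r b K n M t gamma rho w
    using r2 b1 gam rhoa mw gap n1 n_def by unfold_locales auto
  define P where "P = (4 * r - 1) * (K - 1)"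
  obtain r' where r': "r = r' + 2" using r2 le_Suc_ex by (metis add.commute)
  have KK: "K * (40 * r' + 40) \<le> k"
  proof -
    have "K * (10 * (4 * r - 4)) \<le> k" unfolding Kd by (rule div_times_less_eq_dividend)
    moreover have "10 * (4 * r - 4) = 40 * r' + 40" using r' by simp
    ultimately show ?thesis by simp
  qed
  have P7: "40 * P \<le> 7 * k"
  proof -
    have "P \<le> (4 * r' + 7) * K" unfolding P_def using r' by (intro mult_le_mono) auto
    hence "40 * P \<le> 160 * (r' * K) + 280 * K" by (simp add: algebra_simps)
    moreover have "K * (40 * r' + 40) = 40 * (r' * K) + 40 * K" by (simp add: algebra_simps)
    ultimately show ?thesis using KK by linarith
  qed
  have n2: "k \<le> 2 * n + 1" using n_def by simp
  have nP: "P + 2 < n" using P7 n2 k40 by linarith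
  define R where "R = n - 2 - P"
  have R4: "k \<le> 4 * R" using P7 n2 k40 nP unfolding R_def by linarith
  have nR: "n = P + R + 2" using nP R_def by simp
  obtain i0 where i0: "i0 < P" "W.g i0 > b"
    using W.prefix[OF K2] nP unfolding P_def by auto
  have big: "\<forall>s. P \<le> s \<and> s + 1 < n \<longrightarrow> W.g s > b"
  proof (intro allI impI)
    fix s assume s: "P \<le> s \<and> s + 1 < n"
    have "W.g i0 \<le> W.g s" by (rule W.g_mono) (use s i0 in auto)
    then show "W.g s > b" using i0 by simp
  qed
  define T where "T = t - 1"
  have T1: "T \<ge> 1" using t2 T_def by simp
  define J where "J = R div T"
  have JT: "J * T \<le> R" unfolding J_def by (rule div_times_less_eq_dividend)
  have JT2: "R < J * T + T"
  proof -
    have "R div T * T + R mod T = R" by (rule div_mult_mod_eq)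
    moreover have "R mod T < T" using T1 by simp
    ultimately show ?thesis unfolding J_def by linarith
  qed
  have tel: "J * b + T * W.g P \<le> T * W.g (P + J * T)"
    using W.telescope[OF t2 big, of J] JT nR unfolding T_def by simp
  define G where "G = W.g (n - 2)"
  have gG: "W.g (P + J * T) \<le> G"
    unfolding G_def by (rule W.g_mono) (use JT nR in auto)
  have gP: "W.g P > b" using big nP by simp
  have TbP: "T * b \<le> T * W.g P" using gP by (intro mult_le_mono2) simp
  have TG: "T * W.g (P + J * T) \<le> T * G" using gG by (intro mult_le_mono2)
  have nat1: "J * b + T * b \<le> T * G" using tel TbP TG by linarith
  define kp where "kp = real k powr (1 - eps / 2)"
  have kp0: "kp \<ge> 0" unfolding kp_def by simp
  have r1: "(real J + real T) * real b \<le> real T * real G"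
  proof -
    have "real (J * b + T * b) \<le> real (T * G)" using nat1 by (rule of_nat_mono)
    then show ?thesis by (simp add: algebra_simps)
  qed
  have r2': "real T ^ 2 * kp \<le> real T * (real J + real T)"
  proof -
    have "real T ^ 2 * kp \<le> real k / 4" using tk unfolding T_def kp_def by simp
    also have "\<dots> \<le> real R" using R4 by simp
    also have "\<dots> \<le> real J * real T + real T" using JT2 by (simp flip: of_nat_mult of_nat_add)
    also have "\<dots> \<le> real T * (real J + real T)"
    proof -
      have "real T \<le> real T * real T" using T1 by simp
      then show ?thesis by (simp add: algebra_simps)
    qed
    finally show ?thesis .
  qed
  have "real T ^ 2 * (kp * real b) \<le> real T * (real J + real T) * real b"
    using mult_right_mono[OF r2', of "real b"] by (simp add: algebra_simps)
  also have "\<dots> \<le> real T * (real T * real G)"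
    using mult_left_mono[OF r1, of "real T"] by (simp add: algebra_simps)
  also have "\<dots> = real T ^ 2 * real G" by (simp add: power2_eq_square)
  finally have "real T ^ 2 * (kp * real b) \<le> real T ^ 2 * real G" .
  hence fin: "kp * real b \<le> real G" using T1 by simp
  have "n - 2 + 1 = n - 1" using nP by simp
  hence "G = w (n - 1) - w (n - 2)" unfolding G_def by simp
  then show ?thesis using fin unfolding kp_def n_def by (simp add: mult.commute)
qed

lemma t_facts:
  fixes x kp :: real and k :: nat
  assumes "x \<ge> 2" "x ^ 2 * kp \<le> real k / 4" "kp \<ge> 0"
  shows "nat \<lfloor>x\<rfloor> \<ge> 2 \<and> real (nat \<lfloor>x\<rfloor> - 1) ^ 2 * kp \<le> real k / 4"
proof -
  have f2: "\<lfloor>x\<rfloor> \<ge> 2" using assms(1) by linarith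
  have "real (nat \<lfloor>x\<rfloor> - 1) \<le> x" using f2 by (simp add: of_nat_diff) linarith
  moreover have "0 \<le> real (nat \<lfloor>x\<rfloor> - 1)" by simp
  ultimately have "real (nat \<lfloor>x\<rfloor> - 1) ^ 2 \<le> x ^ 2" by (intro power_mono) auto
  hence "real (nat \<lfloor>x\<rfloor> - 1) ^ 2 * kp \<le> x ^ 2 * kp" using assms(3) by (intro mult_right_mono)
  then show ?thesis using f2 assms(2) by linarith
qed

theorem lemma2p3:
  fixes r :: nat and \<epsilon> :: real
  assumes "r \<ge> 2" and "\<epsilon> > 0"
  shows "\<exists>k0::nat. \<forall>k\<ge>k0.
    (let K = k div (10 * (4 * r - 4));
         b = AW K (r - 1) - 1;
         M = nat \<lfloor>real k powr (2 * real r - 1 - \<epsilon>) /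
                   (2 ^ (r - 1) * (40 * real r) ^ (r\<^sup>2 - 1))\<rfloor>;
         L = log 2 (real r ^ 2 / (real r ^ 2 - 1));
         t = nat \<lfloor>(4 * real r - 2) * (2 * real r + 1) / L * log 2 (real k)
                   + (2 * real r + 1) * (log 2 (real r) + 1) / L\<rfloor>
     in \<forall>(gamma :: nat \<Rightarrow> nat \<Rightarrow> nat) (rho :: nat \<Rightarrow> nat \<times> nat).
          (\<forall>i<r. (\<forall>x\<in>{1..b}. gamma i x < r \<and> gamma i x \<noteq> i) \<and>
                 \<not> (\<exists>w. mono_wave (gamma i) {1..b} K w)) \<longrightarrow>
          (\<forall>g. rho g \<in> {..<r} \<times> {1..r}) \<longrightarrow>
          (\<forall>a d. 1 \<le> a \<and> a + (t - 1) * d \<le> M \<and> d > b \<longrightarrow> good_AP r b M rho t a d) \<longrightarrow>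
          (\<forall>w. mono_wave (scheme_color r b gamma rho) {1..M} (k div 2) w \<longrightarrow>
               real (w (k div 2 - 1) - w (k div 2 - 2)) \<ge> real b * real k powr (1 - \<epsilon> / 2)))"
proof -
  have r2: "r \<ge> 2" using assms by simp
  define L where "L = log 2 (real r ^ 2 / (real r ^ 2 - 1))"
  define A where "A = (4 * real r - 2) * (2 * real r + 1) / L"
  define B where "B = (2 * real r + 1) * (log 2 (real r) + 1) / L"
  have rr: "real r ^ 2 \<ge> 4"
  proof -
    have "(2::real) ^ 2 \<le> real r ^ 2" using r2 by (intro power_mono) auto
    then show ?thesis by simp
  qed
  have Lp: "L > 0"
  proof -
    have "1 < real r ^ 2 / (real r ^ 2 - 1)" using rr by (simp add: field_simps)
    then show ?thesis unfolding L_def by simp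
  qed
  have lr: "log 2 (real r) \<ge> 0" using r2 by simp
  have Ap: "A > 0" unfolding A_def using Lp r2 by (intro divide_pos_pos mult_pos_pos) auto
  have L1: "L \<le> 1"
  proof -
    have y: "real r ^ 2 / (real r ^ 2 - 1) \<le> 2" using rr by (simp add: divide_le_eq)
    have y0: "0 < real r ^ 2 / (real r ^ 2 - 1)" using rr r2 by (intro divide_pos_pos) auto
    have "L \<le> log 2 2" unfolding L_def using y y0 by (subst log_le_cancel_iff) auto
    then show ?thesis by simp
  qed
  define X where "X = (2 * real r + 1) * (log 2 (real r) + 1)"
  have X5: "X \<ge> 5"
  proof -
    have "5 * 1 \<le> (2 * real r + 1) * (log 2 (real r) + 1)"
      using r2 lr by (intro mult_mono) auto
    then show ?thesis unfolding X_def by simp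
  qed
  have "X * L \<le> X * 1" using L1 X5 by (intro mult_left_mono) auto
  hence "X \<le> X / L" using Lp by (simp add: le_divide_eq)
  hence Bp: "B \<ge> 2" unfolding B_def X_def using X5 X_def by simp
  have ev: "eventually (\<lambda>k::nat. ((A * log 2 (real k) + B)^2 * real k powr (1 - \<epsilon>/2) \<le> real k / 4
            \<and> A * log 2 (real k) + B \<ge> 2) \<and> k \<ge> 80 * r + 40) sequentially"
    using asym_main[OF assms(2) Ap Bp] eventually_ge_at_top by (rule eventually_conj)
  then obtain k0 where k0: "\<And>k. k \<ge> k0 \<Longrightarrow> ((A * log 2 (real k) + B)^2 * real k powr (1 - \<epsilon>/2) \<le> real k / 4
            \<and> A * log 2 (real k) + B \<ge> 2) \<and> k \<ge> 80 * r + 40"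
    unfolding eventually_sequentially by blast
  show ?thesis
  proof (rule exI[of _ k0], intro allI impI)
    fix k :: nat assume kk: "k \<ge> k0"
    note kf = k0[OF kk]
    have tf: "nat \<lfloor>A * log 2 (real k) + B\<rfloor> \<ge> 2 \<and>
        real (nat \<lfloor>A * log 2 (real k) + B\<rfloor> - 1) ^ 2 * real k powr (1 - \<epsilon>/2) \<le> real k / 4"
      using kf by (intro t_facts) auto
    have k40: "k \<ge> 40" using kf by simp
    have K2: "k div (10 * (4 * r - 4)) \<ge> 2"
    proof -
      have m: "10 * (4 * r - 4) > 0" using r2 by simp
      have "10 * (4 * r - 4) \<le> 40 * r" by simp
      hence "2 * (10 * (4 * r - 4)) \<le> k" using kf by linarith
      hence "(2 * (10 * (4 * r - 4))) div (10 * (4 * r - 4)) \<le> k div (10 * (4 * r - 4))"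
        by (rule div_le_mono)
      then show ?thesis using m by simp
    qed
    note tf' = tf[unfolded A_def B_def L_def]
    show "let K = k div (10 * (4 * r - 4));
         b = AW K (r - 1) - 1;
         M = nat \<lfloor>real k powr (2 * real r - 1 - \<epsilon>) /
                   (2 ^ (r - 1) * (40 * real r) ^ (r\<^sup>2 - 1))\<rfloor>;
         L = log 2 (real r ^ 2 / (real r ^ 2 - 1));
         t = nat \<lfloor>(4 * real r - 2) * (2 * real r + 1) / L * log 2 (real k)
                   + (2 * real r + 1) * (log 2 (real r) + 1) / L\<rfloor>
     in \<forall>(gamma :: nat \<Rightarrow> nat \<Rightarrow> nat) (rho :: nat \<Rightarrow> nat \<times> nat).
          (\<forall>i<r. (\<forall>x\<in>{1..b}. gamma i x < r \<and> gamma i x \<noteq> i) \<and>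
                 \<not> (\<exists>w. mono_wave (gamma i) {1..b} K w)) \<longrightarrow>
          (\<forall>g. rho g \<in> {..<r} \<times> {1..r}) \<longrightarrow>
          (\<forall>a d. 1 \<le> a \<and> a + (t - 1) * d \<le> M \<and> d > b \<longrightarrow> good_AP r b M rho t a d) \<longrightarrow>
          (\<forall>w. mono_wave (scheme_color r b gamma rho) {1..M} (k div 2) w \<longrightarrow>
               real (w (k div 2 - 1) - w (k div 2 - 2)) \<ge> real b * real k powr (1 - \<epsilon> / 2))"
      unfolding Let_def
      apply (intro allI impI)
      apply (rule core[OF r2 k40 refl K2 conjunct1[OF tf'] conjunct2[OF tf']])
      apply assumption+
      done
  qed
qed

end
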